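(* Let $1\le s<t\le n$ and $0<m<\binom{n}{s}$, and let $m+1=\sum_{k=0}^{\ell-1}\binom{n_{s-k}}{s-k}$ be the $s$-cascade representation of $m+1$ (of length $\ell$). Then $k^t_s(m+1)>k^t_s(m)$ if and only if $t\le\ell+n_{s-\ell+1}-1$.
   Context: Colex order on finite subsets of $\mathbb N$: $A<B$ iff $\max(A\triangle B)\in B$. $\mathbb C^{(s)}(m)$ is the $s$-graph whose edges are the first $m$ $s$-subsets of $\mathbb N$ in colex order, and $k^t_s(m)$ is the number of $t$-sets all of whose $s$-subsets are edges of $\mathbb C^{(s)}(m)$. A strict $s$-cascade is an integer sequence $n_s>n_{s-1}>\dots>n_{s-\ell+1}$ with $0\le\ell\le s$ and $n_{s-k}\ge s-k$ for all $k$; every $m\ge0$ has a unique representation $m=\sum_{k=0}^{\ell-1}\binom{n_{s-k}}{s-k}$ by a strict $s$-cascade (its $s$-cascade representation, of length $\ell$). *)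

theory Defs
  imports Main
begin

definition colex_less :: "nat set \<Rightarrow> nat set \<Rightarrow> bool" where
  "colex_less A B \<longleftrightarrow> A \<noteq> B \<and> Max ((A - B) \<union> (B - A)) \<in> B"

definition ssets :: "nat \<Rightarrow> nat set set" where
  "ssets s = {A. finite A \<and> card A = s}"

text \<open>Edges of the colex graph C^(s)(m): the first m s-sets in colex order,
  i.e. those s-sets having fewer than m colex-predecessors among the s-sets.\<close>
definition colex_graph :: "nat \<Rightarrow> nat \<Rightarrow> nat set set" where
  "colex_graph s m = {A \<in> ssets s. card {B \<in> ssets s. colex_less B A} < m}"

definition kts :: "nat \<Rightarrow> nat \<Rightarrow> nat \<Rightarrow> nat" where
  "kts t s m = card {T \<in> ssets t. \<forall>S. S \<subseteq> T \<and> card S = s \<longrightarrow> S \<in> colex_graph s m}"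

text \<open>Strict s-cascade, as a list ns with ns!k = n_(s-k), of length l = length ns.\<close>
definition strict_cascade :: "nat \<Rightarrow> nat list \<Rightarrow> bool" where
  "strict_cascade s ns \<longleftrightarrow> length ns \<le> s
     \<and> (\<forall>k. Suc k < length ns \<longrightarrow> ns ! Suc k < ns ! k)
     \<and> (\<forall>k < length ns. s - k \<le> ns ! k)"

definition cascade_value :: "nat \<Rightarrow> nat list \<Rightarrow> nat" where
  "cascade_value s ns = (\<Sum>k < length ns. (ns ! k) choose (s - k))"

end

theory Submission
  imports Defs
begin

definition wt :: "nat set \<Rightarrow> nat" where "wt A = (\<Sum>a\<in>A. 2^a)"

lemma geo2: "(\<Sum>i<n. (2::nat)^i) < 2^n"
  by (induction n) auto

lemma wt_lt_pow: assumes "finite A" "A \<subseteq> {..<x}" shows "wt A < 2^x"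
proof -
  have "wt A \<le> (\<Sum>i<x. (2::nat)^i)" unfolding wt_def
    by (rule sum_mono2) (use assms in auto)
  with geo2[of x] show ?thesis by linarith
qed

lemma wt_ge: assumes "finite A" "x \<in> A" shows "2^x \<le> wt A"
  unfolding wt_def using assms by (metis member_le_sum zero_le)

lemma wt_lt: assumes "finite A" "finite B" "x \<in> B - A" "\<forall>y\<in>A-B. y < x"
  shows "wt A < wt B"
proof -
  have a: "wt A = wt (A \<inter> B) + wt (A - B)" unfolding wt_def using assms(1) by (rule sum.Int_Diff)
  have b: "wt B = wt (A \<inter> B) + wt (B - A)" unfolding wt_def using assms(2)
    by (metis Int_commute sum.Int_Diff)
  have "wt (A - B) < 2^x" using assms by (intro wt_lt_pow) auto
  moreover have "2^x \<le> wt (B - A)" using assms by (intro wt_ge) auto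
  ultimately show ?thesis using a b by linarith
qed

lemma colex_wt: assumes "finite A" "finite B" shows "colex_less A B \<longleftrightarrow> wt A < wt B"
proof (cases "A = B")
  case True then show ?thesis by (simp add: colex_less_def)
next
  case False
  define D where "D = (A - B) \<union> (B - A)"
  have fD: "finite D" "D \<noteq> {}" using assms False unfolding D_def by auto
  have D': "(B - A) \<union> (A - B) = D" unfolding D_def by auto
  have mx: "Max D \<in> D" using fD by simp
  have le: "\<forall>y\<in>D. y \<le> Max D" using fD by simp
  have lt: "y < Max D" if "y \<in> D" "y \<noteq> Max D" for y using le that by force
  show ?thesis
  proof (cases "Max D \<in> B")
    case True
    then have "Max D \<in> B - A" using mx D_def by auto
    moreover have "\<forall>y\<in>A-B. y < Max D" using lt \<open>Max D \<in> B - A\<close> D_def by auto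
    ultimately have "wt A < wt B" using assms by (intro wt_lt[where x="Max D"]) auto
    then show ?thesis using True False by (simp add: colex_less_def D_def)
  next
    case F: False
    then have "Max D \<in> A - B" using mx D_def by auto
    moreover have "\<forall>y\<in>B-A. y < Max D" using lt \<open>Max D \<in> A - B\<close> D_def by auto
    ultimately have "wt B < wt A" using assms by (intro wt_lt[where x="Max D"]) auto
    then show ?thesis using F False by (auto simp add: colex_less_def D_def)
  qed
qed

definition rk :: "nat \<Rightarrow> nat set \<Rightarrow> nat" where
  "rk s A = card {B. finite B \<and> card B = s \<and> wt B < wt A}"

lemma wt_bound: assumes "finite B" "wt B < K" shows "B \<subseteq> {..<K}"
proof
  fix b assume "b \<in> B"
  then have "2^b \<le> wt B" using wt_ge assms by auto
  moreover have "b < 2^b" by (rule less_exp)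
  ultimately have "b < K" using assms(2) by linarith
  then show "b \<in> {..<K}" by simp
qed

lemma fin_lower: "finite {B. finite B \<and> card B = s \<and> wt B < K}"
proof -
  have "{B. finite B \<and> card B = s \<and> wt B < K} \<subseteq> Pow {..<K}" using wt_bound by auto
  then show ?thesis by (rule finite_subset) auto
qed

lemma wt_insert: "finite B \<Longrightarrow> a \<notin> B \<Longrightarrow> wt (insert a B) = 2^a + wt B"
  unfolding wt_def by simp

lemma rk_step:
  assumes "finite A" "card A = Suc s" "a = Max A"
  shows "rk (Suc s) A = (a choose Suc s) + rk s (A - {a})"
proof -
  have ne: "A \<noteq> {}" using assms(2) by auto
  have aA: "a \<in> A" using assms(1,3) ne by simp
  have age: "y \<le> a" if "y \<in> A" for y using assms(1,3) that by simp
  have A'lt: "A - {a} \<subseteq> {..<a}" using age by (auto simp: le_less)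
  have wA: "wt A = 2^a + wt (A - {a})" using wt_insert[of "A - {a}" a] assms aA
    by (simp add: insert_absorb)
  have wA'lt: "wt (A - {a}) < 2^a" using A'lt assms by (intro wt_lt_pow) auto
  define X1 where "X1 = {B. B \<subseteq> {..<a} \<and> card B = Suc s}"
  define Y where "Y = {B. finite B \<and> card B = s \<and> wt B < wt (A - {a})}"
  have Ylt: "B \<subseteq> {..<a}" if "B \<in> Y" for B
  proof
    fix b assume "b \<in> B"
    then have "2^b \<le> wt B" using that wt_ge unfolding Y_def by auto
    moreover have "wt B < wt (A - {a})" using that unfolding Y_def by auto
    ultimately have "(2::nat)^b < 2^a" using wA'lt by linarith
    then show "b \<in> {..<a}" by simp
  qed
  have eq: "{B. finite B \<and> card B = Suc s \<and> wt B < wt A} = X1 \<union> insert a ` Y"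
  proof (intro equalityI subsetI)
    fix B assume "B \<in> {B. finite B \<and> card B = Suc s \<and> wt B < wt A}"
    then have B: "finite B" "card B = Suc s" "wt B < wt A" by auto
    have Ble: "b \<le> a" if "b \<in> B" for b
    proof (rule ccontr)
      assume "\<not> b \<le> a"
      then have "A \<subseteq> {..<b}" using age by fastforce
      then have "wt A < 2^b" using assms by (intro wt_lt_pow) auto
      moreover have "2^b \<le> wt B" using B that wt_ge by auto
      ultimately show False using B by linarith
    qed
    show "B \<in> X1 \<union> insert a ` Y"
    proof (cases "a \<in> B")
      case True
      have wB: "wt B = 2^a + wt (B - {a})" using wt_insert[of "B - {a}" a] B True
        by (simp add: insert_absorb)
      have "card (B - {a}) = s" using B True by simp
      then have "B - {a} \<in> Y" unfolding Y_def using B wB wA by auto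
      moreover have "B = insert a (B - {a})" using True by auto
      ultimately show ?thesis by blast
    next
      case False
      then have "B \<subseteq> {..<a}" using Ble by (auto simp: le_less)
      then show ?thesis using B unfolding X1_def by auto
    qed
  next
    fix B assume "B \<in> X1 \<union> insert a ` Y"
    then show "B \<in> {B. finite B \<and> card B = Suc s \<and> wt B < wt A}"
    proof
      assume "B \<in> X1"
      then have B: "B \<subseteq> {..<a}" "card B = Suc s" unfolding X1_def by auto
      then have fB: "finite B" using finite_subset by blast
      have "wt B < 2^a" using B fB by (intro wt_lt_pow) auto
      then show ?thesis using fB B wA by auto
    next
      assume "B \<in> insert a ` Y"
      then obtain B' where B': "B' \<in> Y" "B = insert a B'" by auto
      have "a \<notin> B'" using Ylt[OF B'(1)] by auto
      then show ?thesis using B' wt_insert[of B' a] wA unfolding Y_def by auto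
    qed
  qed
  have fX1: "finite X1" unfolding X1_def by (rule finite_subset[of _ "Pow {..<a}"]) auto
  have fY: "finite Y" unfolding Y_def by (rule fin_lower)
  have cX1: "card X1 = a choose Suc s" unfolding X1_def using n_subsets[of "{..<a}" "Suc s"] by simp
  have inj: "inj_on (insert a) Y"
  proof (rule inj_onI)
    fix B C assume "B \<in> Y" "C \<in> Y" "insert a B = insert a C"
    moreover have "a \<notin> B" "a \<notin> C" using Ylt \<open>B \<in> Y\<close> \<open>C \<in> Y\<close> by auto
    ultimately show "B = C" by (metis insert_ident)
  qed
  have disj: "X1 \<inter> insert a ` Y = {}" unfolding X1_def by auto
  have "rk (Suc s) A = card X1 + card (insert a ` Y)" unfolding rk_def eq
    using fX1 fY disj by (intro card_Un_disjoint) auto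
  also have "\<dots> = (a choose Suc s) + card Y" using cX1 card_image[OF inj] by simp
  finally show ?thesis unfolding rk_def Y_def by simp
qed

lemma sdist: "sorted_wrt (>) (xs::nat list) \<Longrightarrow> distinct xs"
  by (induction xs) auto

lemma rk_list:
  assumes "sorted_wrt (>) xs"
  shows "rk (length xs) (set xs) = (\<Sum>k<length xs. (xs ! k) choose (length xs - k))"
  using assms
proof (induction xs)
  case Nil
  then show ?case by (simp add: rk_def wt_def)
next
  case (Cons x ys)
  have d: "distinct (x # ys)" using Cons.prems sdist by blast
  have mx: "Max (set (x # ys)) = x" using Cons.prems by (auto intro!: Max_eqI simp: less_imp_le)
  have c: "card (set (x # ys)) = Suc (length ys)" using d distinct_card by fastforce
  have s: "set (x # ys) - {x} = set ys" using d by auto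
  have "rk (length (x # ys)) (set (x # ys)) = (x choose Suc (length ys)) + rk (length ys) (set ys)"
    using rk_step[OF _ c mx[symmetric]] s by simp
  also have "\<dots> = (\<Sum>k<length (x#ys). ((x#ys) ! k) choose (length (x#ys) - k))"
    using Cons unfolding length_Cons sum.lessThan_Suc_shift by simp
  finally show ?case .
qed

lemma hockey: "j \<le> N \<Longrightarrow> (\<Sum>i<j. (N - 1 - i) choose (j - i)) = (N choose j) - 1"
proof (induction j arbitrary: N)
  case 0
  then show ?case by simp
next
  case (Suc j)
  then obtain M where M: "N = Suc M" "j \<le> M" by (cases N) auto
  have "(\<Sum>i<Suc j. (N - 1 - i) choose (Suc j - i)) = ((N - 1 - 0) choose (Suc j - 0)) + (\<Sum>i<j. (N - 1 - Suc i) choose (Suc j - Suc i))"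
    by (rule sum.lessThan_Suc_shift)
  also have "\<dots> = (M choose Suc j) + (\<Sum>i<j. (M - 1 - i) choose (j - i))"
    using M by simp
  also have "\<dots> = (M choose Suc j) + ((M choose j) - 1)" using Suc.IH[OF M(2)] by simp
  also have "\<dots> = (N choose Suc j) - 1" using M zero_less_binomial[OF M(2)] by (simp, linarith)
  finally show ?case .
qed

lemma sum_split_add: "(\<Sum>k<a+b. f k) = (\<Sum>k<a. f k) + (\<Sum>i<b. f (a+i))" for f :: "nat \<Rightarrow> nat"
  by (induction b) (auto simp: add_Suc_right)

lemma dec_chain:
  assumes "\<forall>k. Suc k < length xs \<longrightarrow> xs ! Suc k < xs ! k" "k < i" "i < length (xs::nat list)"
  shows "xs ! i < xs ! k"
  using assms(2,3)
proof (induction i)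
  case 0 then show ?case by simp
next
  case (Suc i)
  have "xs ! Suc i < xs ! i" using assms(1) Suc.prems by blast
  then show ?case using Suc by (cases "k = i") auto
qed

lemma cg: "colex_graph s k = {A. finite A \<and> card A = s \<and> rk s A < k}"
proof -
  have h: "{B \<in> ssets s. colex_less B A} = {B. finite B \<and> card B = s \<and> wt B < wt A}" if "finite A" for A
    using colex_wt that unfolding ssets_def by auto
  show ?thesis
  proof (rule set_eqI)
    fix A
    show "A \<in> colex_graph s k \<longleftrightarrow> A \<in> {A. finite A \<and> card A = s \<and> rk s A < k}"
    proof (cases "finite A")
      case True
      then show ?thesis unfolding colex_graph_def rk_def ssets_def using h[OF True]
        unfolding ssets_def by simp
    next
      case False
      then show ?thesis unfolding colex_graph_def ssets_def by simp
    qed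
  qed
qed

lemma rk_mono:
  assumes "finite A" "finite B" "card A = s" "card B = s" "wt A < wt B"
  shows "rk s A < rk s B"
proof -
  have "{C. finite C \<and> card C = s \<and> wt C < wt A} \<subset> {C. finite C \<and> card C = s \<and> wt C < wt B}"
    using assms by auto
  then show ?thesis unfolding rk_def using fin_lower by (intro psubset_card_mono) auto
qed

lemma wt_inj: assumes "finite A" "finite B" "wt A = wt B" shows "A = B"
proof (rule ccontr)
  assume ne: "A \<noteq> B"
  define D where "D = (A - B) \<union> (B - A)"
  have "finite D" "D \<noteq> {}" using assms ne unfolding D_def by auto
  then have "Max D \<in> D" by simp
  then have "colex_less A B \<or> colex_less B A" using ne unfolding colex_less_def D_def
    by (auto simp: Un_commute)
  then show False using colex_wt assms by auto
qed

lemma rk_inj: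
  assumes "finite A" "finite B" "card A = s" "card B = s" "rk s A = rk s B"
  shows "A = B"
proof (rule ccontr)
  assume "A \<noteq> B"
  then have "wt A \<noteq> wt B" using wt_inj assms by blast
  then have "wt A < wt B \<or> wt B < wt A" by auto
  then show False using rk_mono[of A B s] rk_mono[of B A s] assms by auto
qed

theorem mainTheorem10:
  fixes s t n m :: nat and ns :: "nat list"
  assumes "1 \<le> s" and "s < t" and "t \<le> n"
    and "0 < m" and "m < n choose s"
    and "strict_cascade s ns" and "cascade_value s ns = m + 1"
  shows "kts t s (m + 1) > kts t s m \<longleftrightarrow>
         t \<le> length ns + ns ! (length ns - 1) - 1"
proof -
  define L where "L = length ns"
  define N where "N = ns ! (L - 1)"
  define j where "j = s - (L - 1)"
  define lo where "lo = N - j"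
  have Ls: "L \<le> s" and dec: "\<forall>k. Suc k < L \<longrightarrow> ns ! Suc k < ns ! k"
    and bnd: "\<forall>k<L. s - k \<le> ns ! k"
    using assms(6) unfolding strict_cascade_def L_def by auto
  have val: "(\<Sum>k<L. (ns ! k) choose (s - k)) = m + 1" using assms(7) unfolding cascade_value_def L_def .
  have L1: "L \<ge> 1" using val by (cases L) auto
  have Nj: "j \<le> N" using bnd[rule_format, of "L - 1"] L1 unfolding N_def j_def by auto
  have j1: "j \<ge> 1" using Ls L1 unfolding j_def by auto
  have chain: "N < ns ! k" if "k < L - 1" for k
    using dec_chain[of ns k "L - 1"] dec that L1 unfolding N_def L_def by auto
  define es where "es = take (L - 1) ns @ map (\<lambda>i. N - 1 - i) [0..<j]"
  define E where "E = set es"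
  have les: "length es = s" unfolding es_def j_def L_def using Ls L1 L_def by auto
  have srt: "sorted_wrt (>) es"
  proof -
    have "sorted_wrt (>) ns" unfolding sorted_wrt_iff_nth_less
      using dec_chain[of ns] dec unfolding L_def by auto
    then have a: "sorted_wrt (>) (take (L - 1) ns)" by (rule sorted_wrt_take)
    have b: "sorted_wrt (>) (map (\<lambda>i. N - 1 - i) [0..<j])" unfolding sorted_wrt_iff_nth_less
      using Nj by auto
    have c: "\<forall>x\<in>set (take (L - 1) ns). \<forall>y\<in>set (map (\<lambda>i. N - 1 - i) [0..<j]). y < x"
    proof (intro ballI)
      fix x y assume "x \<in> set (take (L - 1) ns)" "y \<in> set (map (\<lambda>i. N - 1 - i) [0..<j])"
      then obtain k where "k < L - 1" "x = ns ! k" by (auto simp: in_set_conv_nth L_def)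
      then have "N < x" using chain by auto
      moreover have "y \<le> N - 1" using \<open>y \<in> _\<close> by auto
      ultimately show "y < x" by linarith
    qed
    show ?thesis unfolding es_def sorted_wrt_append using a b c by blast
  qed
  have fE: "finite E" unfolding E_def by simp
  have cE: "card E = s" unfolding E_def using sdist[OF srt] les by (simp add: distinct_card)
  have loE: "lo \<in> E"
  proof -
    have "lo = N - 1 - (j - 1)" unfolding lo_def using j1 Nj by auto
    moreover have "j - 1 \<in> set [0..<j]" using j1 by auto
    ultimately have "lo \<in> (\<lambda>i. N - 1 - i) ` set [0..<j]" by (intro image_eqI[where x="j - 1"])
    then have "lo \<in> set (map (\<lambda>i. N - 1 - i) [0..<j])" by (simp only: set_map)
    then show ?thesis unfolding E_def es_def by auto
  qed
  have Ege: "lo \<le> x" if "x \<in> E" for x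
  proof -
    have "x \<in> set (take (L - 1) ns) \<or> x \<in> set (map (\<lambda>i. N - 1 - i) [0..<j])"
      using that unfolding E_def es_def by auto
    then show ?thesis
    proof
      assume "x \<in> set (take (L - 1) ns)"
      then obtain k where "k < L - 1" "x = ns ! k" by (auto simp: in_set_conv_nth L_def)
      then show ?thesis using chain[of k] unfolding lo_def by auto
    next
      assume "x \<in> set (map (\<lambda>i. N - 1 - i) [0..<j])"
      then obtain i where "i < j" "x = N - 1 - i" by auto
      then show ?thesis unfolding lo_def using Nj by auto
    qed
  qed
  have rkE: "rk s E = m"
  proof -
    have "rk s E = (\<Sum>k<s. (es ! k) choose (s - k))"
      using rk_list[OF srt] les unfolding E_def by simp
    also have "\<dots> = (\<Sum>k<(L - 1) + j. (es ! k) choose (s - k))"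
      using Ls L1 unfolding j_def by simp
    also have "\<dots> = (\<Sum>k<L - 1. (es ! k) choose (s - k)) + (\<Sum>i<j. (es ! (L - 1 + i)) choose (s - (L - 1 + i)))"
      by (rule sum_split_add)
    also have "\<dots> = (\<Sum>k<L - 1. (ns ! k) choose (s - k)) + (\<Sum>i<j. (N - 1 - i) choose (j - i))"
    proof -
      have lt: "length (take (L - 1) ns) = L - 1" unfolding L_def by simp
      have "(\<Sum>k<L - 1. (es ! k) choose (s - k)) = (\<Sum>k<L - 1. (ns ! k) choose (s - k))"
        by (rule sum.cong) (auto simp: es_def nth_append lt L_def)
      moreover have "(\<Sum>i<j. (es ! (L - 1 + i)) choose (s - (L - 1 + i))) = (\<Sum>i<j. (N - 1 - i) choose (j - i))"
      proof (rule sum.cong)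
        fix i assume "i \<in> {..<j}"
        then have i: "i < j" by simp
        have "es ! (length (take (L - 1) ns) + i) = map (\<lambda>i. N - 1 - i) [0..<j] ! i"
          unfolding es_def by (rule nth_append_length_plus)
        then have "es ! (L - 1 + i) = N - 1 - i" using lt i by simp
        moreover have "s - (L - 1 + i) = j - i" unfolding j_def by simp
        ultimately show "(es ! (L - 1 + i)) choose (s - (L - 1 + i)) = (N - 1 - i) choose (j - i)" by simp
      qed simp
      ultimately show ?thesis by simp
    qed
    also have "\<dots> = (\<Sum>k<L - 1. (ns ! k) choose (s - k)) + ((N choose j) - 1)"
      using hockey[OF Nj] by simp
    also have "\<dots> = m"
    proof -
      have "(\<Sum>k<L. (ns ! k) choose (s - k)) = (\<Sum>k<L - 1. (ns ! k) choose (s - k)) + (N choose j)"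
        using L1 unfolding N_def j_def by (cases L) auto
      moreover have "N choose j > 0" using Nj by simp
      ultimately show ?thesis using val by linarith
    qed
    finally show ?thesis .
  qed
  define F where "F k = {T \<in> ssets t. \<forall>S. S \<subseteq> T \<and> card S = s \<longrightarrow> S \<in> colex_graph s k}" for k
  have kF: "kts t s k = card (F k)" for k unfolding kts_def F_def by simp
  have Gmono: "colex_graph s m \<subseteq> colex_graph s (m + 1)" unfolding cg by auto
  have Fmono: "F m \<subseteq> F (m + 1)" unfolding F_def using Gmono by blast
  have Gfin: "finite (colex_graph s (m + 1))"
  proof -
    have "inj_on (rk s) (colex_graph s (m + 1))" unfolding cg inj_on_def using rk_inj by blast
    moreover have "rk s ` colex_graph s (m + 1) \<subseteq> {..<m+1}" unfolding cg by auto
    ultimately show ?thesis using finite_imageD finite_subset by blast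
  qed
  have Ffin: "finite (F (m + 1))"
  proof -
    have "F (m + 1) \<subseteq> Pow (\<Union> (colex_graph s (m + 1)))"
    proof
      fix T assume T: "T \<in> F (m + 1)"
      then have fT: "finite T" "card T = t" and P: "\<And>S. S \<subseteq> T \<Longrightarrow> card S = s \<Longrightarrow> S \<in> colex_graph s (m + 1)"
        unfolding F_def ssets_def by auto
      have "x \<in> \<Union> (colex_graph s (m + 1))" if "x \<in> T" for x
      proof -
        have "s - 1 \<le> card (T - {x})" using fT that assms(2) by simp
        then obtain B where B: "B \<subseteq> T - {x}" "card B = s - 1" "finite B" by (rule obtain_subset_with_card_n)
        have "x \<notin> B" using B by auto
        then have "card (insert x B) = s" using B assms(1) by simp
        moreover have "insert x B \<subseteq> T" using B that by auto
        ultimately show ?thesis using P by blast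
      qed
      then show "T \<in> Pow (\<Union> (colex_graph s (m + 1)))" by auto
    qed
    moreover have "finite (\<Union> (colex_graph s (m + 1)))" using Gfin by (rule finite_Union) (auto simp: cg)
    ultimately show ?thesis by (meson finite_Pow_iff finite_subset)
  qed
  have step1: "kts t s (m + 1) > kts t s m \<longleftrightarrow> (\<exists>T. T \<in> F (m + 1) \<and> T \<notin> F m)"
  proof
    assume "kts t s (m + 1) > kts t s m"
    then have "F (m + 1) \<noteq> F m" unfolding kF by auto
    then show "\<exists>T. T \<in> F (m + 1) \<and> T \<notin> F m" using Fmono by auto
  next
    assume "\<exists>T. T \<in> F (m + 1) \<and> T \<notin> F m"
    then have "F m \<subset> F (m + 1)" using Fmono by auto
    then show "kts t s (m + 1) > kts t s m" unfolding kF using Ffin by (rule psubset_card_mono[rotated])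
  qed
  have step2: "(\<exists>T. T \<in> F (m + 1) \<and> T \<notin> F m) \<longleftrightarrow> t - s \<le> lo"
  proof
    assume "\<exists>T. T \<in> F (m + 1) \<and> T \<notin> F m"
    then obtain T where T1: "T \<in> F (m + 1)" and T2: "T \<notin> F m" by blast
    have fT: "finite T" "card T = t" and P: "\<And>S. S \<subseteq> T \<Longrightarrow> card S = s \<Longrightarrow> finite S \<and> rk s S < m + 1"
      using T1 unfolding F_def ssets_def cg by auto
    obtain S where S: "S \<subseteq> T" "card S = s" "S \<notin> colex_graph s m" using T1 T2 unfolding F_def by auto
    have fS: "finite S" using S fT finite_subset by blast
    have "rk s S = m" using S P[OF S(1,2)] unfolding cg by auto
    then have "S = E" using rk_inj[of S E s] fS fE S cE rkE by auto
    then have ET: "E \<subseteq> T" using S by simp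
    have TE: "T - E \<subseteq> {..<lo}"
    proof
      fix x assume x: "x \<in> T - E"
      show "x \<in> {..<lo}"
      proof (rule ccontr)
        assume "x \<notin> {..<lo}"
        moreover have "x \<noteq> lo" using loE x by auto
        ultimately have xlo: "lo < x" by simp
        define S' where "S' = insert x (E - {lo})"
        have S'T: "S' \<subseteq> T" using x ET unfolding S'_def by auto
        have cS': "card S' = s" unfolding S'_def using x fE cE loE assms(1) by auto
        have fS': "finite S'" unfolding S'_def using fE by simp
        have "wt E < wt S'" using fE fS' x xlo unfolding S'_def
          by (intro wt_lt[where x=x]) auto
        then have "rk s E < rk s S'" using rk_mono fE fS' cE cS' by blast
        moreover have "rk s S' < m + 1" using P[OF S'T cS'] by simp
        ultimately show False using rkE by simp
      qed
    qed
    have "card (T - E) = t - s" using fT ET cE fE by (simp add: card_Diff_subset)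
    moreover have "card (T - E) \<le> card {..<lo}" using TE by (intro card_mono) auto
    ultimately show "t - s \<le> lo" by simp
  next
    assume tl: "t - s \<le> lo"
    define T where "T = E \<union> {..<t - s}"
    have disj: "E \<inter> {..<t - s} = {}" using Ege tl by fastforce
    have fT: "finite T" unfolding T_def using fE by simp
    have cT: "card T = t" unfolding T_def using card_Un_disjoint[OF fE _ disj] cE assms(2) by simp
    have "T \<in> F (m + 1)"
      unfolding F_def ssets_def cg
    proof (intro CollectI conjI allI impI fT cT)
      fix S assume S: "S \<subseteq> T \<and> card S = s"
      have fS: "finite S" using S fT finite_subset by blast
      show "finite S" by (rule fS)
      show "card S = s" using S by simp
      show "rk s S < m + 1"
      proof (cases "S = E")
        case True then show ?thesis using rkE by simp
      next
        case False
        have "\<not> E \<subseteq> S"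
        proof
          assume "E \<subseteq> S"
          then have "E = S" using card_seteq[OF fS] S cE by auto
          then show False using False by simp
        qed
        then obtain x where x: "x \<in> E - S" by auto
        have "\<forall>y\<in>S - E. y < x"
        proof
          fix y assume y: "y \<in> S - E"
          then have "y < t - s" using S unfolding T_def by auto
          moreover have "lo \<le> x" using Ege x by auto
          ultimately show "y < x" using tl by linarith
        qed
        then have "wt S < wt E" using fS fE x by (intro wt_lt[where x=x]) auto
        then have "rk s S < rk s E" using rk_mono fE fS cE S by blast
        then show ?thesis using rkE by simp
      qed
    qed
    moreover have "T \<notin> F m"
      unfolding F_def cg using rkE cE fE unfolding T_def by auto
    ultimately show "\<exists>T. T \<in> F (m + 1) \<and> T \<notin> F m" by blast
  qed
  have step3: "t - s \<le> lo \<longleftrightarrow> t \<le> L + N - 1"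
    using Ls L1 Nj assms(2) unfolding lo_def j_def by linarith
  show ?thesis using step1 step2 step3 unfolding L_def N_def by simp
qed

end
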